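(* In the deterministic flow interdiction problem (with the setting below), there exists an optimal interdiction strategy $w$ which is pure and supported on a single-path flow, i.e., $w(\mathbf{f}^* )=1$ for some single-path flow $\mathbf{f}^*\in\mathcal{F}_{\le\gamma}$.
   Context: Let $G=(V,E)$ be a simple directed acyclic graph with capacities $C\in\mathbb{R}_{\ge0}^E$, $s,t\in V$ with a directed $s$-$t$ path, and budget $\gamma$ with $0<\gamma\le\min_{e}C(e)$. An $s$-$t$ flow is $\mathbf{f}\in\mathbb{R}^E$ with $0\le\mathbf{f}(e)\le C(e)$ and flow conservation at all $v\ne s,t$; $val(\mathbf{f})=\sum_{(s,u)\in E}\mathbf{f}(s,u)$; $\mathcal{F}_{\le\gamma}$ is the set of $s$-$t$ flows with value at most $\gamma$. An interdiction strategy is a finitely supported probability distribution $w$ on $\mathcal{F}_{\le\gamma}$. A single-path flow is an $s$-$t$ flow whose positive entries lie on the edges of one $s$-$t$ path. User paths $P=\{p_1,\dots,p_k\}$ are directed paths (edge sets) with initial flow values $\lambda_i\ge0$, $\sum_{i:e\in p_i}\lambda_i\le C(e)$ for all $e$. $T(\mathbf{f},P)$ is the optimal value of: maximize $\sum_i\tilde\lambda_i$ s.t. $\sum_{i:e\in p_i}\tilde\lambda_i\le C(e)-\mathbf{f}(e)$ for all $e$, $0\le\tilde\lambda_i\le\lambda_i$; $\Lambda(\mathbf{f},P)=\sum_i\lambda_i-T(\mathbf{f},P)$, $\Lambda(w,P)=\sum_{\mathbf{f}}w(\mathbf{f})\Lambda(\mathbf{f},P)$. The deterministic flow interdiction problem: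 given $P$ and its initial values, find an interdiction strategy $w$ maximizing $\Lambda(w,P)$. *)

theory Defs
  imports Main "HOL-Library.FuncSet" Complex_Main
begin

type_synonym 'v edge = "'v \<times> 'v"

definition dipath :: "'v edge set \<Rightarrow> 'v list \<Rightarrow> bool" where
  "dipath E vs \<longleftrightarrow> vs \<noteq> [] \<and> distinct vs \<and> (\<forall>i. Suc i < length vs \<longrightarrow> (vs ! i, vs ! Suc i) \<in> E)"

definition path_edges :: "'v list \<Rightarrow> 'v edge set" where
  "path_edges vs = {(vs ! i, vs ! Suc i) | i. Suc i < length vs}"

definition st_path :: "'v edge set \<Rightarrow> 'v \<Rightarrow> 'v \<Rightarrow> 'v list \<Rightarrow> bool" where
  "st_path E s t vs \<longleftrightarrow> dipath E vs \<and> hd vs = s \<and> last vs = t"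

definition st_flow :: "'v set \<Rightarrow> 'v edge set \<Rightarrow> ('v edge \<Rightarrow> real) \<Rightarrow> 'v \<Rightarrow> 'v \<Rightarrow> ('v edge \<Rightarrow> real) \<Rightarrow> bool" where
  "st_flow V E C s t f \<longleftrightarrow>
     (\<forall>e. e \<notin> E \<longrightarrow> f e = 0) \<and>
     (\<forall>e\<in>E. 0 \<le> f e \<and> f e \<le> C e) \<and>
     (\<forall>v\<in>V - {s, t}. (\<Sum>e\<in>{e\<in>E. snd e = v}. f e) = (\<Sum>e\<in>{e\<in>E. fst e = v}. f e))"

definition flow_val :: "'v edge set \<Rightarrow> 'v \<Rightarrow> ('v edge \<Rightarrow> real) \<Rightarrow> real" where
  "flow_val E s f = (\<Sum>e\<in>{e\<in>E. fst e = s}. f e)"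

definition flows_le :: "'v set \<Rightarrow> 'v edge set \<Rightarrow> ('v edge \<Rightarrow> real) \<Rightarrow> 'v \<Rightarrow> 'v \<Rightarrow> real \<Rightarrow> ('v edge \<Rightarrow> real) set" where
  "flows_le V E C s t \<gamma> = {f. st_flow V E C s t f \<and> flow_val E s f \<le> \<gamma>}"

definition single_path_flow :: "'v set \<Rightarrow> 'v edge set \<Rightarrow> ('v edge \<Rightarrow> real) \<Rightarrow> 'v \<Rightarrow> 'v \<Rightarrow> ('v edge \<Rightarrow> real) \<Rightarrow> bool" where
  "single_path_flow V E C s t f \<longleftrightarrow> st_flow V E C s t f \<and>
     (\<exists>vs. st_path E s t vs \<and> (\<forall>e. f e > 0 \<longrightarrow> e \<in> path_edges vs))"

definition strategy :: "'v set \<Rightarrow> 'v edge set \<Rightarrow> ('v edge \<Rightarrow> real) \<Rightarrow> 'v \<Rightarrow> 'v \<Rightarrow> real \<Rightarrow> (('v edge \<Rightarrow> real) \<Rightarrow> real) \<Rightarrow> bool" where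
  "strategy V E C s t \<gamma> w \<longleftrightarrow>
     finite {f. w f \<noteq> 0} \<and> (\<forall>f. 0 \<le> w f) \<and> {f. w f \<noteq> 0} \<subseteq> flows_le V E C s t \<gamma> \<and>
     (\<Sum>f\<in>{f. w f \<noteq> 0}. w f) = 1"

text \<open>Users are indexed by i < k, with paths p i (edge sets) and initial values lam i.
  T(f,P): optimal value of the residual maximisation LP.\<close>
definition T_val :: "'v edge set \<Rightarrow> ('v edge \<Rightarrow> real) \<Rightarrow> nat \<Rightarrow> (nat \<Rightarrow> 'v edge set) \<Rightarrow> (nat \<Rightarrow> real) \<Rightarrow> ('v edge \<Rightarrow> real) \<Rightarrow> real" where
  "T_val E C k p lam f = Sup {(\<Sum>i<k. lt i) | lt.
      (\<forall>e\<in>E. (\<Sum>i\<in>{i. i < k \<and> e \<in> p i}. lt i) \<le> C e - f e) \<and>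
      (\<forall>i<k. 0 \<le> lt i \<and> lt i \<le> lam i)}"

definition Lambda_flow :: "'v edge set \<Rightarrow> ('v edge \<Rightarrow> real) \<Rightarrow> nat \<Rightarrow> (nat \<Rightarrow> 'v edge set) \<Rightarrow> (nat \<Rightarrow> real) \<Rightarrow> ('v edge \<Rightarrow> real) \<Rightarrow> real" where
  "Lambda_flow E C k p lam f = (\<Sum>i<k. lam i) - T_val E C k p lam f"

definition Lambda_strat :: "'v edge set \<Rightarrow> ('v edge \<Rightarrow> real) \<Rightarrow> nat \<Rightarrow> (nat \<Rightarrow> 'v edge set) \<Rightarrow> (nat \<Rightarrow> real) \<Rightarrow> (('v edge \<Rightarrow> real) \<Rightarrow> real) \<Rightarrow> real" where
  "Lambda_strat E C k p lam w = (\<Sum>f\<in>{f. w f \<noteq> 0}. w f * Lambda_flow E C k p lam f)"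

end

theory Submission
  imports Defs
begin


lemma dipath_mono: "dipath D vs \<Longrightarrow> D \<subseteq> E \<Longrightarrow> dipath E vs"
  unfolding dipath_def by blast

lemma dipath_rtrancl: "dipath E vs \<Longrightarrow> i \<le> j \<Longrightarrow> j < length vs \<Longrightarrow> (vs!i, vs!j) \<in> E\<^sup>*"
proof (induction j)
  case 0 thus ?case by simp
next
  case (Suc j)
  show ?case
  proof (cases "i = Suc j")
    case True thus ?thesis by simp
  next
    case False
    hence "i \<le> j" using Suc by simp
    hence "(vs!i, vs!j) \<in> E\<^sup>*" using Suc by simp
    moreover have "(vs!j, vs!Suc j) \<in> E" using Suc.prems unfolding dipath_def by blast
    ultimately show ?thesis by (rule rtrancl_into_rtrancl)
  qed
qed

lemma dipath_snoc: assumes "dipath E vs" "(last vs, z) \<in> E" "z \<notin> set vs"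
  shows "dipath E (vs @ [z])"
proof -
  have ne: "vs \<noteq> []" using assms(1) dipath_def by auto
  { fix i assume i: "Suc i < length (vs @ [z])"
    have "((vs@[z]) ! i, (vs@[z]) ! Suc i) \<in> E"
    proof (cases "Suc i < length vs")
      case True thus ?thesis using assms(1) by (simp add: nth_append dipath_def)
    next
      case False
      hence "Suc i = length vs" using i by simp
      hence "i = length vs - 1" by simp
      thus ?thesis using assms(2) ne \<open>Suc i = length vs\<close> by (simp add: nth_append last_conv_nth)
    qed }
  thus ?thesis using assms unfolding dipath_def by auto
qed

lemma dipath_cons: assumes "dipath E vs" "(z, hd vs) \<in> E" "z \<notin> set vs"
  shows "dipath E (z # vs)"
proof -
  have ne: "vs \<noteq> []" using assms(1) dipath_def by auto
  { fix i assume i: "Suc i < length (z # vs)"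
    have "((z#vs) ! i, (z#vs) ! Suc i) \<in> E"
    proof (cases i)
      case 0 thus ?thesis using assms(2) ne by (simp add: hd_conv_nth)
    next
      case (Suc j)
      thus ?thesis using assms(1) i by (simp add: dipath_def)
    qed }
  thus ?thesis using assms unfolding dipath_def by auto
qed

lemma cyc_snoc: assumes "dipath E vs" "z \<in> set vs" "(last vs, z) \<in> E" "acyclic E"
  shows False
proof -
  have ne: "vs \<noteq> []" using assms(1) dipath_def by auto
  obtain j where j: "j < length vs" "vs!j = z" using assms(2) by (metis in_set_conv_nth)
  have "(vs!j, vs!(length vs - 1)) \<in> E\<^sup>*" using dipath_rtrancl[OF assms(1), of j "length vs - 1"] j by simp
  hence "(z, last vs) \<in> E\<^sup>*" using j ne by (simp add: last_conv_nth)
  hence "(last vs, last vs) \<in> E\<^sup>+" using assms(3) by (meson rtrancl_into_trancl2)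
  thus False using assms(4) unfolding acyclic_def by blast
qed

lemma cyc_cons: assumes "dipath E vs" "z \<in> set vs" "(z, hd vs) \<in> E" "acyclic E"
  shows False
proof -
  have ne: "vs \<noteq> []" using assms(1) dipath_def by auto
  obtain j where j: "j < length vs" "vs!j = z" using assms(2) by (metis in_set_conv_nth)
  have "(vs!0, vs!j) \<in> E\<^sup>*" using dipath_rtrancl[OF assms(1), of 0 j] j by simp
  hence "(hd vs, z) \<in> E\<^sup>*" using j ne by (simp add: hd_conv_nth)
  hence "(z, z) \<in> E\<^sup>+" using assms(3) by (meson rtrancl_into_trancl2)
  thus False using assms(4) unfolding acyclic_def by blast
qed

lemma dipath_set: assumes "dipath E vs" "2 \<le> length vs" "E \<subseteq> V \<times> V"
  shows "set vs \<subseteq> V"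
proof
  fix x assume "x \<in> set vs"
  then obtain i where i: "i < length vs" "vs!i = x" by (metis in_set_conv_nth)
  show "x \<in> V"
  proof (cases "Suc i < length vs")
    case True
    hence "(vs!i, vs!Suc i) \<in> E" using assms(1) dipath_def by blast
    thus ?thesis using assms(3) i by auto
  next
    case False
    hence "Suc (i - 1) < length vs" "Suc (i-1) = i" using i assms(2) by auto
    hence "(vs!(i-1), vs!i) \<in> E" using assms(1) dipath_def by metis
    thus ?thesis using assms(3) i by auto
  qed
qed

lemma max_path:
  assumes finV: "finite V" and EV: "E \<subseteq> V \<times> V" and acyc: "acyclic E" and DE: "D \<subseteq> E"
    and ab: "(a,b) \<in> D"
    and fwd: "\<And>x y. (x,y) \<in> D \<Longrightarrow> y \<notin> {s,t} \<Longrightarrow> \<exists>z. (y,z) \<in> D"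
    and bwd: "\<And>x y. (x,y) \<in> D \<Longrightarrow> x \<notin> {s,t} \<Longrightarrow> \<exists>z. (z,x) \<in> D"
  shows "\<exists>vs. dipath D vs \<and> 2 \<le> length vs \<and> hd vs \<in> {s,t} \<and> last vs \<in> {s,t}"
proof -
  have acD: "acyclic D" using acyc DE acyclic_subset by blast
  have DV: "D \<subseteq> V \<times> V" using DE EV by blast
  have "a \<noteq> b" using ab acD unfolding acyclic_def by blast
  hence P0: "dipath D [a,b] \<and> 2 \<le> length [a,b]" using ab unfolding dipath_def
    by (auto simp: less_Suc_eq)
  have bnd: "\<forall>vs. dipath D vs \<and> 2 \<le> length vs \<longrightarrow> length vs \<le> card V"
  proof (intro allI impI)
    fix vs assume h: "dipath D vs \<and> 2 \<le> length vs"
    hence "set vs \<subseteq> V" using dipath_set DV by blast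
    moreover have "distinct vs" using h dipath_def by blast
    ultimately show "length vs \<le> card V" using finV by (metis card_mono distinct_card)
  qed
  obtain vs where vs: "dipath D vs \<and> 2 \<le> length vs"
    and mx: "\<forall>ws. dipath D ws \<and> 2 \<le> length ws \<longrightarrow> length ws \<le> length vs"
    using ex_has_greatest_nat[of "\<lambda>vs. dipath D vs \<and> 2 \<le> length vs" "[a,b]" length "Suc (card V)"] P0 bnd
    by (metis le_imp_less_Suc)
  have ne: "vs \<noteq> []" using vs by auto
  have "hd vs \<in> {s,t}"
  proof (rule ccontr)
    assume nh: "hd vs \<notin> {s,t}"
    have "Suc 0 < length vs" using vs by auto
    hence "(vs!0, vs!Suc 0) \<in> D" using vs unfolding dipath_def by blast
    then obtain z where z: "(z, hd vs) \<in> D" using bwd nh ne by (metis hd_conv_nth)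
    have "z \<notin> set vs" using cyc_cons[OF _ _ z acD] vs by blast
    hence "dipath D (z # vs)" using dipath_cons[OF _ z] vs by blast
    thus False using mx vs by fastforce
  qed
  moreover have "last vs \<in> {s,t}"
  proof (rule ccontr)
    assume nh: "last vs \<notin> {s,t}"
    have "Suc (length vs - 2) < length vs" using vs by auto
    hence "(vs!(length vs - 2), vs!Suc (length vs - 2)) \<in> D" using vs dipath_def by blast
    moreover have "Suc (length vs - 2) = length vs - 1" using vs by auto
    ultimately have "(vs!(length vs - 2), last vs) \<in> D" using ne by (simp add: last_conv_nth)
    then obtain z where z: "(last vs, z) \<in> D" using fwd nh by blast
    have "z \<notin> set vs" using cyc_snoc[OF _ _ z acD] vs by blast
    hence "dipath D (vs @ [z])" using dipath_snoc[OF _ z] vs by blast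
    thus False using mx vs by fastforce
  qed
  ultimately show ?thesis using vs by blast
qed



definition ind :: "'v list \<Rightarrow> 'v edge \<Rightarrow> real" where
  "ind q e = (if e \<in> path_edges q then 1 else 0)"

definition pflow :: "'v set \<Rightarrow> 'v edge set \<Rightarrow> 'v \<Rightarrow> 'v \<Rightarrow> ('v edge \<Rightarrow> real) \<Rightarrow> bool" where
  "pflow V E s t g \<longleftrightarrow> (\<forall>e. e \<notin> E \<longrightarrow> g e = 0) \<and> (\<forall>e. 0 \<le> g e) \<and>
     (\<forall>v\<in>V - {s, t}. (\<Sum>e\<in>{e\<in>E. snd e = v}. g e) = (\<Sum>e\<in>{e\<in>E. fst e = v}. g e))"

lemma path_edges_sub: "dipath E q \<Longrightarrow> path_edges q \<subseteq> E"
  unfolding path_edges_def dipath_def by blast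

lemma path_edges_finite: "finite (path_edges q)"
proof -
  have "path_edges q = (\<lambda>i. (q!i, q!Suc i)) ` {i. Suc i < length q}"
    unfolding path_edges_def by blast
  moreover have "finite {i. Suc i < length q}" by (rule finite_subset[of _ "{..<length q}"]) auto
  ultimately show ?thesis by simp
qed

lemma st_path_len: "st_path E s t q \<Longrightarrow> s \<noteq> t \<Longrightarrow> 2 \<le> length q"
  unfolding st_path_def dipath_def
  by (metis One_nat_def Suc_1 hd_conv_nth last_conv_nth le_less_linear less_2_cases diff_Suc_1 length_0_conv)

lemma sum_ind: "finite A \<Longrightarrow> (\<Sum>e\<in>A. ind q e) = real (card (A \<inter> path_edges q))"
proof -
  assume "finite A"
  have "(\<Sum>e\<in>A. ind q e) = (\<Sum>e\<in>A. of_bool (e \<in> path_edges q))" unfolding ind_def by (intro sum.cong) auto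
  also have "\<dots> = real (card (A \<inter> {e. e \<in> path_edges q}))" using \<open>finite A\<close> by simp
  finally show ?thesis by simp
qed

lemma in_edges: assumes "st_path E s t q" "v \<noteq> s"
  shows "card {e \<in> path_edges q. snd e = v} = (if v \<in> set q then 1 else 0)"
proof -
  have d: "distinct q" "q \<noteq> []" "hd q = s" using assms unfolding st_path_def dipath_def by auto
  show ?thesis
  proof (cases "v \<in> set q")
    case True
    obtain j where j: "j < length q" "q!j = v" using True by (metis in_set_conv_nth)
    have j0: "j \<noteq> 0" using j d assms(2) by (metis hd_conv_nth)
    have "{e \<in> path_edges q. snd e = v} = {(q!(j - 1), v)}"
    proof
      show "{e \<in> path_edges q. snd e = v} \<subseteq> {(q!(j - 1), v)}"
      proof
        fix e assume "e \<in> {e \<in> path_edges q. snd e = v}"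
        then obtain i where i: "Suc i < length q" "e = (q!i, q!Suc i)" "q!Suc i = v"
          unfolding path_edges_def by auto
        have "Suc i = j" using i j d(1) nth_eq_iff_index_eq by metis
        thus "e \<in> {(q!(j - 1), v)}" using i by auto
      qed
    next
      have "Suc (j-1) < length q" "Suc (j - 1) = j" using j j0 by auto
      thus "{(q!(j - 1), v)} \<subseteq> {e \<in> path_edges q. snd e = v}"
        unfolding path_edges_def using j by (metis (mono_tags, lifting) mem_Collect_eq singletonD snd_conv subsetI)
    qed
    thus ?thesis using True by simp
  next
    case False
    hence "{e \<in> path_edges q. snd e = v} = {}" "{e \<in> path_edges q. fst e = v} = {}"
      unfolding path_edges_def using nth_mem Suc_lessD by fastforce+
    thus ?thesis using False by (simp only: card.empty if_False)
  qed
qed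

lemma out_edges: assumes "st_path E s t q" "v \<noteq> t"
  shows "card {e \<in> path_edges q. fst e = v} = (if v \<in> set q then 1 else 0)"
proof -
  have d: "distinct q" "q \<noteq> []" "last q = t" using assms unfolding st_path_def dipath_def by auto
  show ?thesis
  proof (cases "v \<in> set q")
    case True
    obtain j where j: "j < length q" "q!j = v" using True by (metis in_set_conv_nth)
    have j0: "Suc j < length q" using j d assms(2)
      by (metis Suc_lessI diff_Suc_1 last_conv_nth)
    have "{e \<in> path_edges q. fst e = v} = {(v, q!Suc j)}"
    proof
      show "{e \<in> path_edges q. fst e = v} \<subseteq> {(v, q!Suc j)}"
      proof
        fix e assume "e \<in> {e \<in> path_edges q. fst e = v}"
        then obtain i where i: "Suc i < length q" "e = (q!i, q!Suc i)" "q!i = v"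
          unfolding path_edges_def by auto
        have "i = j" using i j d(1) nth_eq_iff_index_eq by (metis Suc_lessD)
        thus "e \<in> {(v, q!Suc j)}" using i by auto
      qed
    next
      show "{(v, q!Suc j)} \<subseteq> {e \<in> path_edges q. fst e = v}"
        unfolding path_edges_def using j j0 by auto
    qed
    thus ?thesis using True by simp
  next
    case False
    hence "{e \<in> path_edges q. snd e = v} = {}" "{e \<in> path_edges q. fst e = v} = {}"
      unfolding path_edges_def using nth_mem Suc_lessD by fastforce+
    thus ?thesis using False by (simp only: card.empty if_False)
  qed
qed

lemma ind_cons: assumes "st_path E s t q" "v \<noteq> s" "v \<noteq> t" "finite E"
  shows "(\<Sum>e\<in>{e\<in>E. snd e = v}. ind q e) = (\<Sum>e\<in>{e\<in>E. fst e = v}. ind q e)"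
proof -
  have PE: "path_edges q \<subseteq> E" using assms(1) path_edges_sub st_path_def by metis
  have "{e\<in>E. snd e = v} \<inter> path_edges q = {e \<in> path_edges q. snd e = v}" using PE by blast
  moreover have "{e\<in>E. fst e = v} \<inter> path_edges q = {e \<in> path_edges q. fst e = v}" using PE by blast
  ultimately show ?thesis using in_edges[OF assms(1,2)] out_edges[OF assms(1,3)] assms(4)
    by (simp add: sum_ind)
qed

lemma ind_val: assumes "st_path E s t q" "s \<noteq> t" "finite E"
  shows "flow_val E s (ind q) = 1"
proof -
  have PE: "path_edges q \<subseteq> E" using assms(1) path_edges_sub st_path_def by metis
  have "{e\<in>E. fst e = s} \<inter> path_edges q = {e \<in> path_edges q. fst e = s}" using PE by blast
  moreover have "s \<in> set q" using assms(1) unfolding st_path_def dipath_def by auto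
  ultimately show ?thesis using out_edges[OF assms(1,2)] assms(3)
    unfolding flow_val_def by (simp add: sum_ind)
qed



lemma pflow_off: "pflow V E s t g \<Longrightarrow> e \<notin> E \<Longrightarrow> g e = 0"
  unfolding pflow_def by (drule conjunct1) (erule allE, erule mp)
lemma pflow_nn: "pflow V E s t g \<Longrightarrow> 0 \<le> g e"
  unfolding pflow_def by (drule conjunct2, drule conjunct1) (erule allE)
lemma pflow_cons: "pflow V E s t g \<Longrightarrow> v \<in> V - {s,t} \<Longrightarrow> (\<Sum>e\<in>{e\<in>E. snd e = v}. g e) = (\<Sum>e\<in>{e\<in>E. fst e = v}. g e)"
  unfolding pflow_def by (drule conjunct2, drule conjunct2) (erule bspec)

lemma pos_path:
  assumes finV: "finite V" and EV: "E \<subseteq> V \<times> V" and acyc: "acyclic E" and st: "s \<noteq> t"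
    and ex: "\<exists>vs. st_path E s t vs" and pf: "pflow V E s t g" and e0: "e0 \<in> E" "g e0 \<noteq> 0"
  shows "\<exists>q. st_path E s t q \<and> (\<forall>e\<in>path_edges q. 0 < g e)"
proof -
  define D where "D = {e\<in>E. 0 < g e}"
  have finE: "finite E" using finV EV finite_subset by blast
  have nn: "\<And>e. 0 \<le> g e" using pf by (rule pflow_nn)
  have DE: "D \<subseteq> E" unfolding D_def by blast
  have ab: "(fst e0, snd e0) \<in> D" using e0 nn unfolding D_def by (simp add: order_le_neq_trans)
  have fwd: "\<exists>z. (y,z) \<in> D" if xy: "(x,y) \<in> D" "y \<notin> {s,t}" for x y
  proof -
    have yV: "y \<in> V" using xy DE EV by blast
    have "0 < g (x,y)" using xy D_def by blast
    also have "g (x,y) \<le> (\<Sum>e\<in>{e\<in>E. snd e = y}. g e)"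
      by (rule member_le_sum) (use xy DE finE nn in auto)
    also have "\<dots> = (\<Sum>e\<in>{e\<in>E. fst e = y}. g e)" using pflow_cons[OF pf] yV xy by blast
    finally have sp: "0 < (\<Sum>e\<in>{e\<in>E. fst e = y}. g e)" .
    have "\<exists>e\<in>{e\<in>E. fst e = y}. 0 < g e"
    proof (rule ccontr)
      assume "\<not> (\<exists>e\<in>{e\<in>E. fst e = y}. 0 < g e)"
      hence "(\<Sum>e\<in>{e\<in>E. fst e = y}. g e) \<le> 0" by (intro sum_nonpos) (use not_less in blast)
      thus False using sp by simp
    qed
    then obtain e where e: "e \<in> E" "fst e = y" "0 < g e" by blast
    have "e = (y, snd e)" using e(2) by (cases e) simp
    thus ?thesis using e unfolding D_def by (intro exI[of _ "snd e"]) (metis (mono_tags, lifting) mem_Collect_eq)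
  qed
  have bwd: "\<exists>z. (z,x) \<in> D" if xy: "(x,y) \<in> D" "x \<notin> {s,t}" for x y
  proof -
    have yV: "x \<in> V" using xy DE EV by blast
    have "0 < g (x,y)" using xy D_def by blast
    also have "g (x,y) \<le> (\<Sum>e\<in>{e\<in>E. fst e = x}. g e)"
      by (rule member_le_sum) (use xy DE finE nn in auto)
    also have "\<dots> = (\<Sum>e\<in>{e\<in>E. snd e = x}. g e)" using pflow_cons[OF pf] yV xy by simp
    finally have sp: "0 < (\<Sum>e\<in>{e\<in>E. snd e = x}. g e)" .
    have "\<exists>e\<in>{e\<in>E. snd e = x}. 0 < g e"
    proof (rule ccontr)
      assume "\<not> (\<exists>e\<in>{e\<in>E. snd e = x}. 0 < g e)"
      hence "(\<Sum>e\<in>{e\<in>E. snd e = x}. g e) \<le> 0" by (intro sum_nonpos) (use not_less in blast)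
      thus False using sp by simp
    qed
    then obtain e where e: "e \<in> E" "snd e = x" "0 < g e" by blast
    have "e = (fst e, x)" using e(2) by (cases e) simp
    thus ?thesis using e unfolding D_def by (intro exI[of _ "fst e"]) (metis (mono_tags, lifting) mem_Collect_eq)
  qed
  have "\<exists>vs. dipath D vs \<and> 2 \<le> length vs \<and> hd vs \<in> {s,t} \<and> last vs \<in> {s,t}"
    apply (rule max_path[of V E D "fst e0" "snd e0" s t])
    using finV EV acyc DE ab fwd bwd by blast+
  then obtain vs where vs: "dipath D vs" "2 \<le> length vs" "hd vs \<in> {s,t}" "last vs \<in> {s,t}"
    by blast
  have vsE: "dipath E vs" using vs dipath_mono DE by blast
  have ne: "vs \<noteq> []" using vs by auto
  have "hd vs \<noteq> last vs"
  proof -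
    have "distinct vs" using vs dipath_def by blast
    moreover have "0 \<noteq> length vs - 1" using vs by auto
    ultimately show ?thesis using ne vs(2) by (simp add: hd_conv_nth last_conv_nth nth_eq_iff_index_eq)
  qed
  moreover have "\<not> (hd vs = t \<and> last vs = s)"
  proof
    assume h: "hd vs = t \<and> last vs = s"
    have "(vs!0, vs!(length vs - 1)) \<in> E\<^sup>*" using dipath_rtrancl[OF vsE, of 0 "length vs - 1"] ne by simp
    hence ts: "(t, s) \<in> E\<^sup>*" using h ne by (simp add: hd_conv_nth last_conv_nth)
    obtain ws where ws: "st_path E s t ws" using ex by blast
    have wd: "dipath E ws" "hd ws = s" "last ws = t" using ws unfolding st_path_def by auto
    have wne: "ws \<noteq> []" using wd(1) unfolding dipath_def by simp
    have "(ws!0, ws!(length ws - 1)) \<in> E\<^sup>*"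
      using dipath_rtrancl[of E ws 0 "length ws - 1"] wd wne by simp
    hence "(s, t) \<in> E\<^sup>*" using ws wne unfolding st_path_def by (simp add: hd_conv_nth last_conv_nth)
    hence "(s, t) \<in> E\<^sup>+" using st by (meson rtranclD)
    hence "(s, s) \<in> E\<^sup>+" using ts by (meson trancl_rtrancl_trancl)
    thus False using acyc unfolding acyclic_def by blast
  qed
  ultimately have "hd vs = s" "last vs = t" using vs by auto
  hence "st_path E s t vs" unfolding st_path_def using vsE by blast
  moreover have "\<forall>e\<in>path_edges vs. 0 < g e" using path_edges_sub[OF vs(1)] unfolding D_def by blast
  ultimately show ?thesis by blast
qed



lemma zero_case:
  assumes finE: "finite E" and pf: "pflow V E s t g" and z: "card {e\<in>E. g e \<noteq> 0} = 0"
    and C0: "\<forall>e\<in>E. 0 \<le> C e"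
  shows "\<exists>u. (\<forall>i<k. 0 \<le> u i \<and> u i \<le> flow_val E s g / \<gamma> * lam i) \<and>
     (\<forall>e\<in>E. (\<Sum>i\<in>{i. i<k \<and> e \<in> p i}. u i) \<le> flow_val E s g / \<gamma> * C e - g e) \<and>
     flow_val E s g / \<gamma> * \<tau> \<le> (\<Sum>i<k. u i) \<and>
     (0 < flow_val E s g \<longrightarrow> flow_val E s g / \<gamma> * \<tau> < (\<Sum>i<k. u i))"
proof -
  have "{e\<in>E. g e \<noteq> 0} = {}" using z finE by simp
  hence g0: "\<And>e. g e = 0" using pflow_off[OF pf] by blast
  hence "flow_val E s g = 0" unfolding flow_val_def by simp
  thus ?thesis using g0 by (intro exI[of _ "\<lambda>_. 0"]) simp
qed

lemma decomp:
  fixes \<tau> \<gamma> :: real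
  assumes finV: "finite V" and EV: "E \<subseteq> V \<times> V" and acyc: "acyclic E" and st: "s \<noteq> t"
    and ex: "\<exists>vs. st_path E s t vs" and gpos: "0 < \<gamma>" and C0: "\<forall>e\<in>E. 0 \<le> C e"
    and LT: "\<And>q. st_path E s t q \<Longrightarrow> (\<forall>i<k. 0 \<le> LT q i \<and> LT q i \<le> lam i) \<and>
       (\<forall>e\<in>E. (\<Sum>i\<in>{i. i<k \<and> e \<in> p i}. LT q i) \<le> C e - \<gamma> * ind q e) \<and> \<tau> < (\<Sum>i<k. LT q i)"
  shows "pflow V E s t g \<Longrightarrow> card {e\<in>E. g e \<noteq> 0} \<le> n \<Longrightarrow>
     \<exists>u. (\<forall>i<k. 0 \<le> u i \<and> u i \<le> flow_val E s g / \<gamma> * lam i) \<and>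
     (\<forall>e\<in>E. (\<Sum>i\<in>{i. i<k \<and> e \<in> p i}. u i) \<le> flow_val E s g / \<gamma> * C e - g e) \<and>
     flow_val E s g / \<gamma> * \<tau> \<le> (\<Sum>i<k. u i) \<and>
     (0 < flow_val E s g \<longrightarrow> flow_val E s g / \<gamma> * \<tau> < (\<Sum>i<k. u i))"
proof (induction n arbitrary: g)
  case 0
  have "finite E" using finV EV finite_subset by blast
  thus ?case using zero_case[OF _ 0(1) _ C0] 0(2) by simp
next
  case (Suc n)
  have finE: "finite E" using finV EV finite_subset by blast
  show ?case
  proof (cases "card {e\<in>E. g e \<noteq> 0} = 0")
    case True
    thus ?thesis using zero_case[OF finE Suc(2) _ C0] by simp
  next
    case False
    hence "{e\<in>E. g e \<noteq> 0} \<noteq> {}" by (metis card.empty)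
    then obtain e0 where e0: "e0 \<in> E" "g e0 \<noteq> 0" by blast
    obtain q where q: "st_path E s t q" and qpos: "\<forall>e\<in>path_edges q. 0 < g e"
      using pos_path[OF finV EV acyc st ex Suc(2) e0] by blast
    have PE: "path_edges q \<subseteq> E" using q path_edges_sub st_path_def by metis
    have len: "2 \<le> length q" using st_path_len[OF q st] .
    have "Suc 0 < length q" using len by simp
    hence "(q!0, q!Suc 0) \<in> path_edges q" unfolding path_edges_def by blast
    hence PEne: "path_edges q \<noteq> {}" by blast
    define \<mu> where "\<mu> = Min (g ` path_edges q)"
    have "\<mu> \<in> g ` path_edges q" unfolding \<mu>_def using PEne path_edges_finite by (intro Min_in) auto
    then obtain e1 where e1: "e1 \<in> path_edges q" "g e1 = \<mu>" by blast
    have mule: "\<And>e. e \<in> path_edges q \<Longrightarrow> \<mu> \<le> g e" unfolding \<mu>_def using path_edges_finite by (intro Min_le) auto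
    have mupos: "0 < \<mu>" using e1 qpos by auto
    define g' where "g' = (\<lambda>e. g e - \<mu> * ind q e)"
    have nn: "\<And>e. 0 \<le> g e" using Suc(2) by (rule pflow_nn)
    have pf': "pflow V E s t g'"
      unfolding pflow_def
    proof (intro conjI allI impI ballI)
      fix e assume "e \<notin> E" thus "g' e = 0" using pflow_off[OF Suc(2)] PE unfolding g'_def ind_def by auto
    next
      fix e show "0 \<le> g' e" using mule nn unfolding g'_def ind_def by auto
    next
      fix v assume v: "v \<in> V - {s,t}"
      have "(\<Sum>e\<in>{e\<in>E. snd e = v}. g' e) = (\<Sum>e\<in>{e\<in>E. snd e = v}. g e) - \<mu> * (\<Sum>e\<in>{e\<in>E. snd e = v}. ind q e)"
        unfolding g'_def by (simp add: sum_subtractf sum_distrib_left)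
      also have "\<dots> = (\<Sum>e\<in>{e\<in>E. fst e = v}. g e) - \<mu> * (\<Sum>e\<in>{e\<in>E. fst e = v}. ind q e)"
        using pflow_cons[OF Suc(2) v] ind_cons[OF q _ _ finE] v by auto
      also have "\<dots> = (\<Sum>e\<in>{e\<in>E. fst e = v}. g' e)"
        unfolding g'_def by (simp add: sum_subtractf sum_distrib_left)
      finally show "(\<Sum>e\<in>{e\<in>E. snd e = v}. g' e) = (\<Sum>e\<in>{e\<in>E. fst e = v}. g' e)" .
    qed
    have sub: "{e\<in>E. g' e \<noteq> 0} \<subset> {e\<in>E. g e \<noteq> 0}"
    proof
      show "{e\<in>E. g' e \<noteq> 0} \<subseteq> {e\<in>E. g e \<noteq> 0}"
        using qpos unfolding g'_def ind_def by auto
      have "g' e1 = 0" using e1 unfolding g'_def ind_def by simp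
      moreover have "e1 \<in> {e\<in>E. g e \<noteq> 0}" using e1 qpos PE by auto
      ultimately show "{e\<in>E. g' e \<noteq> 0} \<noteq> {e\<in>E. g e \<noteq> 0}" by blast
    qed
    have "card {e\<in>E. g' e \<noteq> 0} < card {e\<in>E. g e \<noteq> 0}"
      using sub finE by (intro psubset_card_mono) auto
    hence "card {e\<in>E. g' e \<noteq> 0} \<le> n" using Suc(3) by simp
    then obtain u' where u': "\<forall>i<k. 0 \<le> u' i \<and> u' i \<le> flow_val E s g' / \<gamma> * lam i"
      "\<forall>e\<in>E. (\<Sum>i\<in>{i. i<k \<and> e \<in> p i}. u' i) \<le> flow_val E s g' / \<gamma> * C e - g' e"
      "flow_val E s g' / \<gamma> * \<tau> \<le> (\<Sum>i<k. u' i)"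
      using Suc.IH[OF pf'] by blast
    have val: "flow_val E s g = flow_val E s g' + \<mu>"
    proof -
      have "flow_val E s g' = flow_val E s g - \<mu> * flow_val E s (ind q)"
        unfolding g'_def flow_val_def by (simp add: sum_subtractf sum_distrib_left)
      thus ?thesis using ind_val[OF q st finE] by simp
    qed
    define v' where "v' = flow_val E s g'"
    define u where "u = (\<lambda>i. \<mu> / \<gamma> * LT q i + u' i)"
    have LTq: "\<forall>i<k. 0 \<le> LT q i \<and> LT q i \<le> lam i"
      "\<forall>e\<in>E. (\<Sum>i\<in>{i. i<k \<and> e \<in> p i}. LT q i) \<le> C e - \<gamma> * ind q e" "\<tau> < (\<Sum>i<k. LT q i)"
      using LT[OF q] by auto
    have mg: "0 < \<mu> / \<gamma>" using mupos gpos by simp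
    have dv: "flow_val E s g / \<gamma> = \<mu> / \<gamma> + v' / \<gamma>" using val v'_def by (simp add: add_divide_distrib)
    have c1: "\<forall>i<k. 0 \<le> u i \<and> u i \<le> flow_val E s g / \<gamma> * lam i"
    proof (intro allI impI conjI)
      fix i assume i: "i < k"
      show "0 \<le> u i" unfolding u_def using LTq(1) u'(1) mg i by (intro add_nonneg_nonneg mult_nonneg_nonneg) auto
      have a: "\<mu> / \<gamma> * LT q i \<le> \<mu> / \<gamma> * lam i" using LTq(1) i mg by (intro mult_left_mono) auto
      have b: "u' i \<le> v' / \<gamma> * lam i" using u'(1) i v'_def by simp
      have "u i \<le> \<mu> / \<gamma> * lam i + v' / \<gamma> * lam i" unfolding u_def using a b by linarith
      also have "\<dots> = flow_val E s g / \<gamma> * lam i" unfolding dv by (simp only: distrib_right)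
      finally show "u i \<le> flow_val E s g / \<gamma> * lam i" .
    qed
    have c2: "\<forall>e\<in>E. (\<Sum>i\<in>{i. i<k \<and> e \<in> p i}. u i) \<le> flow_val E s g / \<gamma> * C e - g e"
    proof
      fix e assume e: "e \<in> E"
      have "(\<Sum>i\<in>{i. i<k \<and> e \<in> p i}. u i) = \<mu> / \<gamma> * (\<Sum>i\<in>{i. i<k \<and> e \<in> p i}. LT q i) + (\<Sum>i\<in>{i. i<k \<and> e \<in> p i}. u' i)"
        unfolding u_def by (simp add: sum.distrib sum_distrib_left)
      also have "\<dots> \<le> \<mu> / \<gamma> * (C e - \<gamma> * ind q e) + (v' / \<gamma> * C e - g' e)"
        using LTq(2) u'(2) e mg v'_def by (intro add_mono mult_left_mono) auto
      also have "\<dots> = flow_val E s g / \<gamma> * C e - g e"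
        unfolding dv g'_def using gpos by (simp add: field_simps)
      finally show "(\<Sum>i\<in>{i. i<k \<and> e \<in> p i}. u i) \<le> flow_val E s g / \<gamma> * C e - g e" .
    qed
    have c3: "flow_val E s g / \<gamma> * \<tau> < (\<Sum>i<k. u i)"
    proof -
      have "(\<Sum>i<k. u i) = \<mu> / \<gamma> * (\<Sum>i<k. LT q i) + (\<Sum>i<k. u' i)"
        unfolding u_def by (simp add: sum.distrib sum_distrib_left)
      moreover have "\<mu> / \<gamma> * \<tau> < \<mu> / \<gamma> * (\<Sum>i<k. LT q i)" using mg LTq(3) by (intro mult_strict_left_mono) auto
      moreover have "v' / \<gamma> * \<tau> \<le> (\<Sum>i<k. u' i)" using u'(3) v'_def by simp
      ultimately show ?thesis unfolding dv distrib_right by linarith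
    qed
    show ?thesis using c1 c2 c3 by (intro exI[of _ u]) auto
  qed
qed



definition feas :: "'v edge set \<Rightarrow> ('v edge \<Rightarrow> real) \<Rightarrow> nat \<Rightarrow> (nat \<Rightarrow> 'v edge set) \<Rightarrow> (nat \<Rightarrow> real) \<Rightarrow> ('v edge \<Rightarrow> real) \<Rightarrow> (nat \<Rightarrow> real) \<Rightarrow> bool" where
  "feas E C k p lam f lt \<longleftrightarrow> (\<forall>e\<in>E. (\<Sum>i\<in>{i. i < k \<and> e \<in> p i}. lt i) \<le> C e - f e) \<and>
      (\<forall>i<k. 0 \<le> lt i \<and> lt i \<le> lam i)"

lemma T_eq: "T_val E C k p lam f = Sup {(\<Sum>i<k. lt i) | lt. feas E C k p lam f lt}"
  unfolding T_val_def feas_def by simp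

lemma T_bdd: "bdd_above {(\<Sum>i<k. lt i) | lt. feas E C k p lam f lt}"
  unfolding bdd_above_def feas_def by (intro exI[of _ "\<Sum>i<k. lam i"]) (auto intro!: sum_mono)

lemma T_ne: "\<forall>i<k. 0 \<le> lam i \<Longrightarrow> \<forall>e\<in>E. 0 \<le> C e - f e \<Longrightarrow> {(\<Sum>i<k. lt i) | lt. feas E C k p lam f lt} \<noteq> {}"
  unfolding feas_def by (auto intro!: exI[of _ "\<lambda>_. 0"])

lemma T_upper: "feas E C k p lam f lt \<Longrightarrow> (\<Sum>i<k. lt i) \<le> T_val E C k p lam f"
  unfolding T_eq by (rule cSup_upper[OF _ T_bdd]) blast

lemma T_le: "{(\<Sum>i<k. lt i) | lt. feas E C k p lam f lt} \<noteq> {} \<Longrightarrow> T_val E C k p lam f \<le> (\<Sum>i<k. lam i)"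
  unfolding T_eq by (rule cSup_least) (auto simp: feas_def intro!: sum_mono)

lemma T_less: "{(\<Sum>i<k. lt i) | lt. feas E C k p lam f lt} \<noteq> {} \<Longrightarrow> \<tau> < T_val E C k p lam f \<Longrightarrow>
   \<exists>lt. feas E C k p lam f lt \<and> \<tau> < (\<Sum>i<k. lt i)"
  unfolding T_eq by (drule less_cSupD) auto

theorem proposition2:
  fixes V :: "'v set" and E :: "'v edge set" and C :: "'v edge \<Rightarrow> real"
    and s t :: 'v and \<gamma> :: real
    and k :: nat and p :: "nat \<Rightarrow> 'v edge set" and lam :: "nat \<Rightarrow> real"
  assumes "finite V" and "E \<subseteq> V \<times> V" and "acyclic E"
    and "s \<in> V" and "t \<in> V" and "s \<noteq> t"
    and "\<exists>vs. st_path E s t vs"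
    and "\<forall>e\<in>E. 0 \<le> C e"
    and "0 < \<gamma>" and "\<forall>e\<in>E. \<gamma> \<le> C e"
    and "\<forall>i<k. \<exists>vs. dipath E vs \<and> p i = path_edges vs"
    and "\<forall>i<k. 0 \<le> lam i"
    and "\<forall>e\<in>E. (\<Sum>i\<in>{i. i < k \<and> e \<in> p i}. lam i) \<le> C e"
  shows "\<exists>w. strategy V E C s t \<gamma> w \<and>
           (\<forall>w'. strategy V E C s t \<gamma> w' \<longrightarrow> Lambda_strat E C k p lam w' \<le> Lambda_strat E C k p lam w) \<and>
           (\<exists>f. f \<in> flows_le V E C s t \<gamma> \<and> single_path_flow V E C s t f \<and> w f = 1)"
proof -
  note finV = assms(1) and EV = assms(2) and acyc = assms(3) and st = assms(6) and ex = assms(7)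
    and C0 = assms(8) and gpos = assms(9) and gC = assms(10) and lam0 = assms(12) and lamC = assms(13)
  have finE: "finite E" using finV EV finite_subset by blast
  define Tf where "Tf = T_val E C k p lam"
  define fq where "fq = (\<lambda>(q::'v list) e. \<gamma> * ind q e)"
  have fq_flow: "fq q \<in> flows_le V E C s t \<gamma> \<and> single_path_flow V E C s t (fq q)"
    if q: "st_path E s t q" for q
  proof -
    have PE: "path_edges q \<subseteq> E" using q path_edges_sub st_path_def by metis
    have sf: "st_flow V E C s t (fq q)" unfolding st_flow_def
    proof (intro conjI allI impI ballI)
      fix e assume "e \<notin> E" thus "fq q e = 0" using PE unfolding fq_def ind_def by auto
    next
      fix e assume "e \<in> E" thus "0 \<le> fq q e" "fq q e \<le> C e" using gpos gC C0 unfolding fq_def ind_def by auto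
    next
      fix v assume v: "v \<in> V - {s,t}"
      show "(\<Sum>e\<in>{e\<in>E. snd e = v}. fq q e) = (\<Sum>e\<in>{e\<in>E. fst e = v}. fq q e)"
        unfolding fq_def using ind_cons[OF q _ _ finE, of v] v by (simp add: sum_distrib_left[symmetric])
    qed
    have "flow_val E s (fq q) = \<gamma>" using ind_val[OF q st finE] unfolding fq_def flow_val_def
      by (simp add: sum_distrib_left[symmetric])
    hence "fq q \<in> flows_le V E C s t \<gamma>" using sf unfolding flows_le_def by simp
    moreover have "single_path_flow V E C s t (fq q)" unfolding single_path_flow_def
      using sf q by (intro conjI exI[of _ q]) (auto simp: fq_def ind_def split: if_splits)
    ultimately show ?thesis by blast
  qed
  have flow_ne: "{(\<Sum>i<k. lt i) | lt. feas E C k p lam f lt} \<noteq> {}" if "f \<in> flows_le V E C s t \<gamma>" for f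
    using that lam0 by (intro T_ne) (auto simp: flows_le_def st_flow_def)
  define P where "P = {q. st_path E s t q}"
  have finP: "finite P"
  proof (rule finite_subset[OF _ finite_lists_length_le[OF finV, of "card V"]])
    show "P \<subseteq> {xs. set xs \<subseteq> V \<and> length xs \<le> card V}"
    proof
      fix q assume "q \<in> P"
      hence q: "st_path E s t q" using P_def by simp
      have d: "dipath E q" using q st_path_def by metis
      have "set q \<subseteq> V" using dipath_set[OF d st_path_len[OF q st] EV] .
      moreover have "distinct q" using d unfolding dipath_def by simp
      ultimately show "q \<in> {xs. set xs \<subseteq> V \<and> length xs \<le> card V}"
        using finV by (metis (mono_tags, lifting) card_mono distinct_card mem_Collect_eq)
    qed
  qed
  have Pne: "P \<noteq> {}" using ex P_def by blast
  define m where "m = Min ((\<lambda>q. Tf (fq q)) ` P)"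
  have "m \<in> (\<lambda>q. Tf (fq q)) ` P" unfolding m_def using finP Pne by (intro Min_in) auto
  then obtain q0 where q0: "q0 \<in> P" "Tf (fq q0) = m" by blast
  have q0min: "\<And>q. q \<in> P \<Longrightarrow> Tf (fq q0) \<le> Tf (fq q)" unfolding q0(2) m_def using finP by simp
  have q0st: "st_path E s t q0" using q0 P_def by simp
  have key: "Tf (fq q0) \<le> Tf f" if f: "f \<in> flows_le V E C s t \<gamma>" for f
  proof (rule ccontr)
    assume "\<not> Tf (fq q0) \<le> Tf f"
    hence lt0: "Tf f < Tf (fq q0)" by simp
    define \<tau> where "\<tau> = Tf f"
    have exq: "\<exists>lt. feas E C k p lam (fq q) lt \<and> \<tau> < (\<Sum>i<k. lt i)" if q: "st_path E s t q" for q
    proof -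
      have "\<tau> < Tf (fq q)" using lt0 q0min[of q] q P_def \<tau>_def by simp
      thus ?thesis using T_less[OF flow_ne[OF conjunct1[OF fq_flow[OF q]]]] Tf_def by simp
    qed
    define LT where "LT = (\<lambda>q. SOME lt. feas E C k p lam (fq q) lt \<and> \<tau> < (\<Sum>i<k. lt i))"
    have LTp: "(\<forall>i<k. 0 \<le> LT q i \<and> LT q i \<le> lam i) \<and>
       (\<forall>e\<in>E. (\<Sum>i\<in>{i. i<k \<and> e \<in> p i}. LT q i) \<le> C e - \<gamma> * ind q e) \<and> \<tau> < (\<Sum>i<k. LT q i)"
      if q: "st_path E s t q" for q
    proof -
      have "feas E C k p lam (fq q) (LT q) \<and> \<tau> < (\<Sum>i<k. LT q i)"
        unfolding LT_def using someI_ex[OF exq[OF q]] .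
      thus ?thesis unfolding feas_def fq_def by blast
    qed
    have fst_flow: "st_flow V E C s t f" and vle: "flow_val E s f \<le> \<gamma>" using f unfolding flows_le_def by auto
    have sfa: "\<forall>e. e \<notin> E \<longrightarrow> f e = 0" "\<forall>e\<in>E. 0 \<le> f e \<and> f e \<le> C e"
      "\<forall>v\<in>V - {s, t}. (\<Sum>e\<in>{e\<in>E. snd e = v}. f e) = (\<Sum>e\<in>{e\<in>E. fst e = v}. f e)"
      using fst_flow unfolding st_flow_def by blast+
    have "\<forall>e. 0 \<le> f e"
    proof
      fix e show "0 \<le> f e" using sfa(1,2) by (cases "e \<in> E") (simp, metis order_refl)
    qed
    hence pf: "pflow V E s t f" unfolding pflow_def using sfa(1,3) by blast
    obtain u where u: "\<forall>i<k. 0 \<le> u i \<and> u i \<le> flow_val E s f / \<gamma> * lam i"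
     "\<forall>e\<in>E. (\<Sum>i\<in>{i. i<k \<and> e \<in> p i}. u i) \<le> flow_val E s f / \<gamma> * C e - f e"
     "flow_val E s f / \<gamma> * \<tau> \<le> (\<Sum>i<k. u i)"
     "0 < flow_val E s f \<longrightarrow> flow_val E s f / \<gamma> * \<tau> < (\<Sum>i<k. u i)"
      using decomp[OF finV EV acyc st ex gpos C0, of k LT lam p \<tau>, OF LTp pf order_refl] by blast
    define v where "v = flow_val E s f"
    have v0: "0 \<le> v" unfolding v_def flow_val_def using pflow_nn[OF pf] by (simp add: sum_nonneg)
    have vg: "v / \<gamma> \<le> 1" using vle gpos v_def by simp
    have sl: "\<tau> < (\<Sum>i<k. lam i)"
      using lt0 T_le[OF flow_ne[OF conjunct1[OF fq_flow[OF q0st]]]] \<tau>_def Tf_def by simp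
    define lt where "lt = (\<lambda>i. u i + (1 - v / \<gamma>) * lam i)"
    have "feas E C k p lam f lt" unfolding feas_def
    proof (intro conjI ballI allI impI)
      fix e assume e: "e \<in> E"
      have "(\<Sum>i\<in>{i. i<k \<and> e \<in> p i}. lt i) = (\<Sum>i\<in>{i. i<k \<and> e \<in> p i}. u i) + (1 - v / \<gamma>) * (\<Sum>i\<in>{i. i<k \<and> e \<in> p i}. lam i)"
        unfolding lt_def by (simp add: sum.distrib sum_distrib_left)
      also have "\<dots> \<le> (v / \<gamma> * C e - f e) + (1 - v / \<gamma>) * C e"
        using u(2) e lamC vg v_def by (intro add_mono mult_left_mono) auto
      also have "\<dots> = C e - f e" by (simp add: algebra_simps)
      finally show "(\<Sum>i\<in>{i. i<k \<and> e \<in> p i}. lt i) \<le> C e - f e" .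
    next
      fix i assume i: "i < k"
      show "0 \<le> lt i" using u(1) i lam0 vg unfolding lt_def by simp
      have "u i \<le> v / \<gamma> * lam i" using u(1) i v_def by simp
      thus "lt i \<le> lam i" unfolding lt_def by (simp add: algebra_simps)
    qed
    hence "(\<Sum>i<k. lt i) \<le> \<tau>" using T_upper \<tau>_def Tf_def by metis
    moreover have "\<tau> < (\<Sum>i<k. lt i)"
    proof -
      have s: "(\<Sum>i<k. lt i) = (\<Sum>i<k. u i) + (1 - v / \<gamma>) * (\<Sum>i<k. lam i)"
        unfolding lt_def by (simp add: sum.distrib sum_distrib_left)
      show ?thesis
      proof (cases "v = 0")
        case True
        thus ?thesis using s sl u(3) v_def by simp
      next
        case False
        hence "0 < v" using v0 by simp
        hence "v / \<gamma> * \<tau> < (\<Sum>i<k. u i)" using u(4) v_def by simp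
        moreover have "(1 - v / \<gamma>) * \<tau> \<le> (1 - v / \<gamma>) * (\<Sum>i<k. lam i)"
          using sl vg by (intro mult_left_mono) auto
        ultimately show ?thesis using s by (simp add: algebra_simps)
      qed
    qed
    ultimately show False by simp
  qed
  define f0 where "f0 = fq q0"
  have f0: "f0 \<in> flows_le V E C s t \<gamma>" "single_path_flow V E C s t f0"
    using fq_flow[OF q0st] f0_def by auto
  have Lmax: "Lambda_flow E C k p lam f \<le> Lambda_flow E C k p lam f0" if "f \<in> flows_le V E C s t \<gamma>" for f
    using key[OF that] unfolding Lambda_flow_def Tf_def f0_def by simp
  define w where "w = (\<lambda>h. if h = f0 then 1 else (0::real))"
  have supp: "{h. w h \<noteq> 0} = {f0}" unfolding w_def by auto
  have sw: "strategy V E C s t \<gamma> w" unfolding strategy_def supp using f0 by (auto simp: w_def)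
  have Lw: "Lambda_strat E C k p lam w = Lambda_flow E C k p lam f0"
    unfolding Lambda_strat_def supp by (simp add: w_def)
  have opt: "Lambda_strat E C k p lam w' \<le> Lambda_strat E C k p lam w" if sw': "strategy V E C s t \<gamma> w'" for w'
  proof -
    let ?S = "{h. w' h \<noteq> 0}"
    have S: "finite ?S" "\<forall>h. 0 \<le> w' h" "?S \<subseteq> flows_le V E C s t \<gamma>" "(\<Sum>h\<in>?S. w' h) = 1"
      using sw' unfolding strategy_def by auto
    have "Lambda_strat E C k p lam w' = (\<Sum>h\<in>?S. w' h * Lambda_flow E C k p lam h)"
      unfolding Lambda_strat_def ..
    also have "\<dots> \<le> (\<Sum>h\<in>?S. w' h * Lambda_flow E C k p lam f0)"
      using S Lmax by (intro sum_mono mult_left_mono) auto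
    also have "\<dots> = Lambda_flow E C k p lam f0" using S(4) by (simp add: sum_distrib_right[symmetric])
    finally show ?thesis using Lw by simp
  qed
  show ?thesis using sw opt f0 by (intro exI[of _ w]) (auto simp: w_def)
qed

end
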